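(* Let $\mathcal B$ be a polyhedral complex in $\mathbb R^d$ that is pure of dimension $d-1$. If every face $\tau\in\mathcal B$ of dimension $d-2$ is contained in at least three faces of $\mathcal B$ of dimension $d-1$, then $\mathcal B$ is the unique coarsest polyhedral complex with support $|\mathcal B|$; that is, every polyhedral complex $\mathcal C$ with $|\mathcal C|=|\mathcal B|$ is a refinement of $\mathcal B$ (each facet of $\mathcal C$ is contained in a facet of $\mathcal B$).
   Context: A polyhedral complex is a finite collection of polyhedra, containing $\emptyset$, closed under taking faces, in which any two members intersect in a common face. Its support $|\mathcal B|$ is the union of its members; it is pure of dimension $k$ if all inclusion-maximal members have dimension $k$. *)

theory Defs
  imports "HOL-Analysis.Analysis"
begin

text \<open>Polyhedra, faces and dimensions are the HOL-Analysis notions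
(polyhedron, face_of, aff_dim; the empty set has aff_dim -1).\<close>

definition polyhedral_complex :: "'a::euclidean_space set set \<Rightarrow> bool" where
  "polyhedral_complex B \<longleftrightarrow>
     finite B \<and> {} \<in> B \<and> (\<forall>P\<in>B. polyhedron P) \<and>
     (\<forall>P\<in>B. \<forall>F. F face_of P \<longrightarrow> F \<in> B) \<and>
     (\<forall>P\<in>B. \<forall>Q\<in>B. (P \<inter> Q) face_of P \<and> (P \<inter> Q) face_of Q)"

definition support :: "'a set set \<Rightarrow> 'a set" where
  "support B = \<Union>B"

definition facets :: "'a set set \<Rightarrow> 'a set set" where
  "facets B = {P \<in> B. \<forall>Q\<in>B. P \<subseteq> Q \<longrightarrow> Q = P}"

definition pure_of_dim :: "'a::euclidean_space set set \<Rightarrow> int \<Rightarrow> bool" where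
  "pure_of_dim B k \<longleftrightarrow> (\<forall>P\<in>facets B. aff_dim P = k)"

definition refines :: "'a set set \<Rightarrow> 'a set set \<Rightarrow> bool" where
  "refines C B \<longleftrightarrow> (\<forall>P\<in>facets C. \<exists>Q\<in>facets B. P \<subseteq> Q)"

end

theory Submission
  imports Defs
begin

lemma aff_span_mem:
  fixes F :: "'a::euclidean_space set"
  assumes "x \<in> F" "v \<in> span ((\<lambda>y. - x + y) ` F)"
  shows "x + v \<in> affine hull F"
proof -
  have "affine hull F = affine hull (insert x F)" using assms(1) by (simp add: insert_absorb)
  also have "\<dots> = (\<lambda>y. x + y) ` span ((\<lambda>y. - x + y) ` F)" by (rule affine_hull_insert_span_gen)
  finally show ?thesis using assms(2) by auto
qed

lemma aff_span_mem2:
  fixes F :: "'a::euclidean_space set"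
  assumes "x \<in> F" "z \<in> affine hull F"
  shows "- x + z \<in> span ((\<lambda>y. - x + y) ` F)"
proof -
  have "affine hull F = affine hull (insert x F)" using assms(1) by (simp add: insert_absorb)
  also have "\<dots> = (\<lambda>y. x + y) ` span ((\<lambda>y. - x + y) ` F)" by (rule affine_hull_insert_span_gen)
  finally show ?thesis using assms(2) by auto
qed

lemma push_in:
  fixes F s :: "'a::euclidean_space set"
  assumes x: "x \<in> rel_interior F" and Fs: "F \<subseteq> s" and cs: "convex s" and q: "q \<in> s"
    and g: "q - x - t *\<^sub>R w \<in> span ((\<lambda>y. - x + y) ` F)" and t: "t > 0"
  shows "\<exists>c0>0. \<forall>c. 0 < c \<and> c \<le> c0 \<longrightarrow> x + c *\<^sub>R w \<in> s"
proof -
  obtain e where e: "e > 0" "ball x e \<inter> affine hull F \<subseteq> F"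
    using x mem_rel_interior_ball by blast
  have xF: "x \<in> F" using x rel_interior_subset by blast
  define g where "g = q - x - t *\<^sub>R w"
  define m0 where "m0 = min (1/2) (e / (2 * (norm g + 1)))"
  have "e / (2 * (norm g + 1)) > 0" using e
    by (intro divide_pos_pos) (auto intro: add_nonneg_pos)
  hence m0: "m0 > 0" "m0 \<le> 1/2" unfolding m0_def by (simp, linarith)
  have "x + c *\<^sub>R w \<in> s" if c: "0 < c" "c \<le> m0 * t" for c
  proof -
    define m where "m = c / t"
    have m: "0 < m" "m \<le> m0" using c t by (auto simp: m_def field_simps)
    define l where "l = m / (1 - m)"
    have l: "0 \<le> l" "l \<le> 2 * m" using m m0 by (auto simp: l_def field_simps)
    have "l * norm g \<le> 2 * m * norm g" using l by (simp add: mult_right_mono)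
    also have "\<dots> \<le> 2 * m0 * norm g" using m by (simp add: mult_right_mono)
    also have "\<dots> \<le> 2 * (e / (2 * (norm g + 1))) * norm g"
      by (intro mult_right_mono mult_left_mono) (auto simp: m0_def)
    also have "\<dots> < e"
    proof -
      have "2 * (e / (2 * (norm g + 1))) * norm g = e * (norm g / (norm g + 1))"
        using norm_ge_zero[of g] by (simp add: divide_simps)
      also have "\<dots> < e * 1" using e by (intro mult_strict_left_mono) (auto simp: divide_simps, smt (verit) norm_ge_zero)
      finally show ?thesis by simp
    qed
    finally have lt: "l * norm g < e" .
    define y where "y = x - l *\<^sub>R g"
    have "y \<in> ball x e" using lt l by (simp add: y_def dist_norm)
    moreover have "y \<in> affine hull F"
    proof -
      have "- (l *\<^sub>R g) \<in> span ((\<lambda>y. - x + y) ` F)"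
        using g by (simp add: g_def span_neg span_mul)
      from aff_span_mem[OF xF this] show ?thesis by (simp add: y_def)
    qed
    ultimately have "y \<in> s" using e Fs by blast
    hence "(1 - m) *\<^sub>R y + m *\<^sub>R q \<in> s"
      using cs q m m0 by (intro convexD) auto
    moreover have "(1 - m) *\<^sub>R y + m *\<^sub>R q = x + c *\<^sub>R w"
    proof -
      have "(1 - m) * l = m" using m m0 by (simp add: l_def)
      hence "(1 - m) *\<^sub>R y + m *\<^sub>R q = (1 - m) *\<^sub>R x - m *\<^sub>R g + m *\<^sub>R q"
        by (simp add: y_def scaleR_diff_right)
      also have "\<dots> = x + (m * t) *\<^sub>R w" by (simp add: g_def algebra_simps)
      also have "m * t = c" using t by (simp add: m_def)
      finally show ?thesis .
    qed
    ultimately show ?thesis by simp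
  qed
  thus ?thesis using m0 t by (intro exI[of _ "m0 * t"]) auto
qed

lemma inter_is_F:
  fixes a b F :: "'a::euclidean_space set"
  assumes ca: "convex a" and cb: "convex b" and dab: "aff_dim a = aff_dim b"
    and Fa: "F face_of a" and Fb: "F face_of b" and dF: "aff_dim F = aff_dim a - 1"
    and ia: "(a \<inter> b) face_of a" and ib: "(a \<inter> b) face_of b" and ne: "a \<noteq> b"
  shows "a \<inter> b = F"
proof (rule ccontr)
  assume nF: "a \<inter> b \<noteq> F"
  have Fsub: "F \<subseteq> a \<inter> b" using Fa Fb face_of_imp_subset by blast
  have cab: "convex (a \<inter> b)" using ca cb convex_Int by blast
  have "F face_of (a \<inter> b)" using face_of_subset[OF Fa Fsub] by blast
  hence lt: "aff_dim F < aff_dim (a \<inter> b)" using face_of_aff_dim_lt[OF cab _ nF[symmetric]] nF by blast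
  have "a \<inter> b = a"
    using face_of_aff_dim_lt[OF ca ia] lt dF by fastforce
  moreover have "a \<inter> b = b"
    using face_of_aff_dim_lt[OF cb ib] lt dF dab by fastforce
  ultimately show False using ne by blast
qed

lemma meet_contra:
  fixes a b F :: "'a::euclidean_space set"
  assumes x: "x \<in> rel_interior F" and Fa: "F \<subseteq> a" and Fb: "F \<subseteq> b"
    and ca: "convex a" and cb: "convex b" and ab: "a \<inter> b = F"
    and qa: "qa \<in> a" and qb: "qb \<in> b"
    and ga: "qa - x - ta *\<^sub>R w \<in> span ((\<lambda>y. - x + y) ` F)"
    and gb: "qb - x - tb *\<^sub>R w \<in> span ((\<lambda>y. - x + y) ` F)"
    and ta: "ta > 0" and tb: "tb > 0"
    and w: "w \<notin> span ((\<lambda>y. - x + y) ` F)"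
  shows False
proof -
  obtain c1 where c1: "c1 > 0" "\<forall>c. 0 < c \<and> c \<le> c1 \<longrightarrow> x + c *\<^sub>R w \<in> a"
    using push_in[OF x Fa ca qa ga ta] by blast
  obtain c2 where c2: "c2 > 0" "\<forall>c. 0 < c \<and> c \<le> c2 \<longrightarrow> x + c *\<^sub>R w \<in> b"
    using push_in[OF x Fb cb qb gb tb] by blast
  define c where "c = min c1 c2"
  have c: "c > 0" using c1 c2 by (simp add: c_def)
  have "x + c *\<^sub>R w \<in> F" using c1 c2 c ab by (auto simp: c_def)
  hence "- x + (x + c *\<^sub>R w) \<in> span ((\<lambda>y. - x + y) ` F)"
    by (intro span_base) blast
  hence "c *\<^sub>R w \<in> span ((\<lambda>y. - x + y) ` F)" by simp
  hence "(1/c) *\<^sub>R (c *\<^sub>R w) \<in> span ((\<lambda>y. - x + y) ` F)" by (rule span_mul)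
  thus False using c w by simp
qed

lemma decomp:
  fixes s F :: "'a::euclidean_space set"
  assumes xF: "x \<in> F" and q1: "q1 \<in> s" "q1 \<notin> affine hull F" and Fs: "F \<subseteq> s"
    and dF: "aff_dim F = aff_dim s - 1"
    and q: "q \<in> affine hull s" "q \<notin> affine hull F"
  shows "\<exists>t. t \<noteq> 0 \<and> q - x - t *\<^sub>R (- x + q1) \<in> span ((\<lambda>y. - x + y) ` F)"
proof -
  have "aff_dim (insert q1 F) = aff_dim s" using q1 dF by (simp add: aff_dim_insert)
  hence "affine hull (insert q1 F) = affine hull s"
    using aff_dim_eq_full_gen[of "insert q1 F" s] q1 Fs by blast
  hence "q \<in> affine hull (insert x (insert q1 F))" using q xF by (simp add: insert_absorb)
  hence "q \<in> (\<lambda>y. x + y) ` span ((\<lambda>y. - x + y) ` (insert q1 F))"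
    by (simp add: affine_hull_insert_span_gen)
  hence "- x + q \<in> span (insert (- x + q1) ((\<lambda>y. - x + y) ` F))" by auto
  then obtain t where t: "(- x + q) - t *\<^sub>R (- x + q1) \<in> span ((\<lambda>y. - x + y) ` F)"
    by (auto simp: span_insert)
  have "t \<noteq> 0"
  proof
    assume "t = 0"
    hence "- x + q \<in> span ((\<lambda>y. - x + y) ` F)" using t by simp
    from aff_span_mem[OF xF this] q show False by simp
  qed
  thus ?thesis using t by (intro exI[of _ t]) (simp add: algebra_simps)
qed

lemma three_sheets:
  fixes s1 s2 s3 F :: "'a::euclidean_space set"
  assumes c1: "convex s1" and c2: "convex s2" and c3: "convex s3"
    and h2: "affine hull s2 = affine hull s1" and h3: "affine hull s3 = affine hull s1"
    and F1: "F face_of s1" and F2: "F face_of s2" and F3: "F face_of s3"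
    and dF: "aff_dim F = aff_dim s1 - 1"
    and i12: "(s1 \<inter> s2) face_of s1" "(s1 \<inter> s2) face_of s2"
    and i13: "(s1 \<inter> s3) face_of s1" "(s1 \<inter> s3) face_of s3"
    and i23: "(s2 \<inter> s3) face_of s2" "(s2 \<inter> s3) face_of s3"
    and d12: "s1 \<noteq> s2" and d13: "s1 \<noteq> s3" and d23: "s2 \<noteq> s3"
    and Fne: "F \<noteq> {}"
  shows False
proof -
  have a2: "aff_dim s2 = aff_dim s1" using h2 by (metis aff_dim_affine_hull)
  have a3: "aff_dim s3 = aff_dim s1" using h3 by (metis aff_dim_affine_hull)
  have e12: "s1 \<inter> s2 = F" using inter_is_F[OF c1 c2 _ F1 F2 dF i12 d12] a2 by simp
  have e13: "s1 \<inter> s3 = F" using inter_is_F[OF c1 c3 _ F1 F3 dF i13 d13] a3 by simp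
  have e23: "s2 \<inter> s3 = F" using inter_is_F[OF c2 c3 _ F2 F3 _ i23 d23] a2 a3 dF by simp
  have cF: "convex F" using F1 face_of_imp_convex by blast
  obtain x where x: "x \<in> rel_interior F" using rel_interior_eq_empty[OF cF] Fne by blast
  have xF: "x \<in> F" using x rel_interior_subset by blast
  have Fs1: "F \<subseteq> s1" and Fs2: "F \<subseteq> s2" and Fs3: "F \<subseteq> s3"
    using F1 F2 F3 face_of_imp_subset by blast+
  have ex: "\<exists>q\<in>s. q \<notin> affine hull F" if "aff_dim s = aff_dim s1" for s
  proof (rule ccontr)
    assume "\<not> ?thesis"
    hence "s \<subseteq> affine hull F" by blast
    hence "aff_dim s \<le> aff_dim (affine hull F)" by (rule aff_dim_subset)
    hence "aff_dim s \<le> aff_dim F" by simp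
    thus False using that dF by simp
  qed
  obtain q1 where q1: "q1 \<in> s1" "q1 \<notin> affine hull F" using ex by blast
  obtain q2 where q2: "q2 \<in> s2" "q2 \<notin> affine hull F" using ex a2 by blast
  obtain q3 where q3: "q3 \<in> s3" "q3 \<notin> affine hull F" using ex a3 by blast
  define L where "L = span ((\<lambda>y. - x + y) ` F)"
  define w where "w = - x + q1"
  have wL: "w \<notin> L"
  proof
    assume "w \<in> L"
    from aff_span_mem[OF xF this[unfolded L_def]] q1 show False by (simp add: w_def)
  qed
  have g1: "q1 - x - 1 *\<^sub>R w \<in> L" by (simp add: w_def L_def span_zero)
  obtain t2 where t2: "t2 \<noteq> 0" "q2 - x - t2 *\<^sub>R w \<in> L"
  proof -
    have "q2 \<in> affine hull s1" using q2(1) h2 hull_subset[of s2 affine] by blast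
    from decomp[OF xF q1 Fs1 dF this q2(2)] show ?thesis using that unfolding L_def w_def by blast
  qed
  obtain t3 where t3: "t3 \<noteq> 0" "q3 - x - t3 *\<^sub>R w \<in> L"
  proof -
    have "q3 \<in> affine hull s1" using q3(1) h3 hull_subset[of s3 affine] by blast
    from decomp[OF xF q1 Fs1 dF this q3(2)] show ?thesis using that unfolding L_def w_def by blast
  qed
  have wL': "- w \<notin> L" using wL span_neg[of "- w"] unfolding L_def by auto
  show False
  proof (cases "t2 > 0")
    case True
    show False using meet_contra[OF x Fs1 Fs2 c1 c2 e12 q1(1) q2(1) g1[unfolded L_def] t2(2)[unfolded L_def] _ True wL[unfolded L_def]] by simp
  next
    case f2: False
    show False
    proof (cases "t3 > 0")
      case True
      show False using meet_contra[OF x Fs1 Fs3 c1 c3 e13 q1(1) q3(1) g1[unfolded L_def] t3(2)[unfolded L_def] _ True wL[unfolded L_def]] by simp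
    next
      case False
      have "q2 - x - (- t2) *\<^sub>R (- w) \<in> L" "q3 - x - (- t3) *\<^sub>R (- w) \<in> L" using t2 t3 by simp_all
      from meet_contra[OF x Fs2 Fs3 c2 c3 e23 q2(1) q3(1) this[unfolded L_def] _ _ wL'[unfolded L_def]]
      show False using f2 False t2 t3 by linarith
    qed
  qed
qed

lemma locality:
  fixes C :: "'a::euclidean_space set set"
  assumes C: "polyhedral_complex C" and S: "S \<in> facets C" and x: "x \<in> rel_interior S"
  shows "\<exists>r>0. \<Union>C \<inter> ball x r \<subseteq> S"
proof -
  have fC: "finite C" and pC: "\<forall>P\<in>C. polyhedron P"
    and iC: "\<forall>P\<in>C. \<forall>Q\<in>C. (P \<inter> Q) face_of P \<and> (P \<inter> Q) face_of Q"
    using C by (auto simp: polyhedral_complex_def)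
  have SC: "S \<in> C" and Smax: "\<forall>Q\<in>C. S \<subseteq> Q \<longrightarrow> Q = S" using S by (auto simp: facets_def)
  define K where "K = \<Union>{T \<in> C. x \<notin> T}"
  have "closed K" unfolding K_def using fC pC polyhedron_imp_closed by (intro closed_Union) auto
  moreover have "x \<notin> K" by (auto simp: K_def)
  ultimately obtain r where r: "r > 0" "ball x r \<subseteq> - K"
    using open_contains_ball[of "- K"] by (auto simp: open_Compl)
  have "\<Union>C \<inter> ball x r \<subseteq> S"
  proof
    fix y assume y: "y \<in> \<Union>C \<inter> ball x r"
    then obtain T where T: "T \<in> C" "y \<in> T" by blast
    have "x \<in> T"
    proof (rule ccontr)
      assume "x \<notin> T" hence "y \<in> K" using T by (auto simp: K_def)
      thus False using y r by auto
    qed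
    have fS: "(T \<inter> S) face_of S" using iC T SC by blast
    have "T \<inter> S = S"
    proof (rule ccontr)
      assume "T \<inter> S \<noteq> S"
      hence "T \<inter> S \<subseteq> rel_frontier S" using face_of_subset_rel_frontier fS by blast
      moreover have "x \<in> T \<inter> S" using \<open>x \<in> T\<close> x rel_interior_subset by blast
      ultimately show False using x by (auto simp: rel_frontier_def)
    qed
    hence "T = S" using Smax T by blast
    thus "y \<in> S" using T by simp
  qed
  thus ?thesis using r by blast
qed

lemma aff_hull_local:
  fixes t S :: "'a::euclidean_space set"
  assumes "convex t" "x \<in> t" "r > 0" "t \<inter> ball x r \<subseteq> S"
  shows "affine hull t \<subseteq> affine hull S"
proof -
  have "t \<inter> ball x r \<noteq> {}" using assms by auto
  hence "affine hull t = affine hull (t \<inter> ball x r)"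
    using affine_hull_convex_Int_open[of t "ball x r"] assms by simp
  also have "\<dots> \<subseteq> affine hull S" using assms(4) by (rule hull_mono)
  finally show ?thesis .
qed

lemma three_elems:
  assumes "3 \<le> card A"
  obtains a b c where "a \<in> A" "b \<in> A" "c \<in> A" "a \<noteq> b" "a \<noteq> c" "b \<noteq> c"
proof -
  obtain T where "T \<subseteq> A" "card T = 3" using obtain_subset_with_card_n[OF assms] by blast
  thus ?thesis using that by (auto simp: card_3_iff)
qed

theorem mainTheorem16:
  fixes B :: "'a::euclidean_space set set"
  assumes "polyhedral_complex B"
    and "pure_of_dim B (int DIM('a) - 1)"
    and "\<forall>\<tau>\<in>B. aff_dim \<tau> = int DIM('a) - 2 \<longrightarrow>
           card {\<sigma>\<in>B. aff_dim \<sigma> = int DIM('a) - 1 \<and> \<tau> \<subseteq> \<sigma>} \<ge> 3"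
  shows "\<forall>C::'a set set. polyhedral_complex C \<and> support C = support B \<longrightarrow> refines C B"
proof (intro allI impI)
  fix C :: "'a set set"
  assume CC: "polyhedral_complex C \<and> support C = support B"
  hence C: "polyhedral_complex C" and supp: "\<Union>C = \<Union>B" by (auto simp: support_def)
  define d where "d = int DIM('a)"
  have fB: "finite B" and eB: "{} \<in> B" and pB: "\<forall>P\<in>B. polyhedron P"
    and faceB: "\<forall>P\<in>B. \<forall>F. F face_of P \<longrightarrow> F \<in> B"
    and iB: "\<forall>P\<in>B. \<forall>Q\<in>B. (P \<inter> Q) face_of P \<and> (P \<inter> Q) face_of Q"
    using assms(1) by (auto simp: polyhedral_complex_def)
  have pure: "\<And>P. P \<in> facets B \<Longrightarrow> aff_dim P = d - 1"
    using assms(2) by (auto simp: pure_of_dim_def d_def)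
  have cond: "\<And>t. t \<in> B \<Longrightarrow> aff_dim t = d - 2 \<Longrightarrow> 3 \<le> card {s\<in>B. aff_dim s = d - 1 \<and> t \<subseteq> s}"
    using assms(3) by (auto simp: d_def)
  have inFacet: "\<exists>Q\<in>facets B. P \<subseteq> Q" if PB: "P \<in> B" for P
  proof -
    obtain m where "m \<in> B" "P \<subseteq> m" "\<forall>b\<in>B. m \<subseteq> b \<longrightarrow> m = b"
      using finite_has_maximal2[OF fB PB] by blast
    thus ?thesis by (auto simp: facets_def)
  qed
  have facB: "\<And>P. P \<in> facets B \<Longrightarrow> P \<in> B" by (auto simp: facets_def)
  have dimB: "aff_dim P \<le> d - 1" if PB: "P \<in> B" for P
  proof -
    obtain Q where "Q \<in> facets B" "P \<subseteq> Q" using inFacet PB by blast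
    thus ?thesis using aff_dim_subset[of P Q] pure[of Q] by linarith
  qed
  have negB: "negligible P" if "P \<in> B" for P
  proof -
    have "convex P" using pB that polyhedron_imp_convex by blast
    moreover have "interior P = {}"
      using aff_dim_nonempty_interior[of P] dimB[OF that] by (auto simp: d_def)
    ultimately show ?thesis using negligible_convex_interior by blast
  qed
  show "refines C B" unfolding refines_def
  proof
    fix S assume S: "S \<in> facets C"
    have SC: "S \<in> C" using S by (auto simp: facets_def)
    have pS: "polyhedron S" using C SC by (auto simp: polyhedral_complex_def)
    have cS: "convex S" and clS: "closed S" using pS polyhedron_imp_convex polyhedron_imp_closed by auto
    show "\<exists>Q\<in>facets B. S \<subseteq> Q"
    proof (cases "S = {}")
      case True
      thus ?thesis using inFacet[OF eB] by blast
    next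
      case Sne: False
      define U where "U = rel_interior S"
      have Une: "U \<noteq> {}" using rel_interior_eq_empty[OF cS] Sne by (simp add: U_def)
      have SB: "S \<subseteq> \<Union>B" using SC supp by blast
      have "negligible (\<Union>B)" using fB negB by blast
      hence "negligible S" using SB negligible_subset by blast
      hence intS: "interior S = {}" using negligible_convex_interior[OF cS] by blast
      have dimS: "aff_dim S \<le> d - 1"
      proof (rule ccontr)
        assume "\<not> ?thesis"
        hence "aff_dim S = DIM('a)" using aff_dim_le_DIM[of S] by (simp add: d_def)
        hence "affine hull S = UNIV" by (simp add: aff_dim_eq_full)
        hence "rel_interior S = interior S" by (rule rel_interior_interior)
        thus False using intS Une by (simp add: U_def)
      qed
      have key: "\<exists>e>0. ball x e \<inter> U \<subseteq> U \<inter> s" if s: "s \<in> facets B" and x: "x \<in> U \<inter> s" for s x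
      proof -
        obtain r0 where r0: "r0 > 0" "\<Union>B \<inter> ball x r0 \<subseteq> S"
          using locality[OF C S, of x] x supp by (auto simp: U_def)
        have hullEq: "affine hull t = affine hull S"
          if t: "t \<in> B" "x \<in> t" "aff_dim t = d - 1" for t
        proof -
          have ct: "convex t" using t pB polyhedron_imp_convex by blast
          have sub: "affine hull t \<subseteq> affine hull S"
            using aff_hull_local[OF ct t(2) r0(1)] r0(2) t(1) by blast
          hence "aff_dim t \<le> aff_dim S"
            by (metis aff_dim_affine_hull aff_dim_subset)
          hence "aff_dim t = aff_dim (affine hull S)" using dimS t(3) by simp
          moreover have "t \<subseteq> affine hull S" using sub hull_subset[of t affine] by blast
          ultimately show ?thesis using aff_dim_eq_full_gen[of t "affine hull S"] by simp
        qed
        have sB: "s \<in> B" using s facB by blast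
        have ps: "polyhedron s" using sB pB by blast
        have xs: "x \<in> s" using x by blast
        show ?thesis
        proof (cases "x \<in> rel_interior s")
          case True
          then obtain e where e: "e > 0" "ball x e \<inter> affine hull s \<subseteq> s"
            using mem_rel_interior_ball by blast
          have "U \<subseteq> affine hull S" using rel_interior_subset hull_subset[of S affine]
            by (auto simp: U_def)
          hence "ball x e \<inter> U \<subseteq> U \<inter> s"
            using e hullEq[OF sB xs pure[OF s]] by blast
          thus ?thesis using e by blast
        next
          case False
          have "x \<in> rel_frontier s" using False xs closure_subset by (auto simp: rel_frontier_def)
          then obtain F where F: "F facet_of s" "x \<in> F" using rel_frontier_of_polyhedron[OF ps] by blast
          have FB: "F \<in> B" using faceB sB F by (auto simp: facet_of_def)
          have dF: "aff_dim F = d - 2" using F pure[OF s] by (auto simp: facet_of_def)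
          obtain s1 s2 s3 where s123: "s1 \<in> {s\<in>B. aff_dim s = d - 1 \<and> F \<subseteq> s}"
            "s2 \<in> {s\<in>B. aff_dim s = d - 1 \<and> F \<subseteq> s}" "s3 \<in> {s\<in>B. aff_dim s = d - 1 \<and> F \<subseteq> s}"
            "s1 \<noteq> s2" "s1 \<noteq> s3" "s2 \<noteq> s3"
            by (rule three_elems[OF cond[OF FB dF]])
          have props: "convex t \<and> affine hull t = affine hull S \<and> F face_of t"
            if "t \<in> {s\<in>B. aff_dim s = d - 1 \<and> F \<subseteq> s}" for t
          proof -
            have t: "t \<in> B" "aff_dim t = d - 1" "F \<subseteq> t" using that by auto
            have "F \<inter> t = F" using t by blast
            hence "F face_of t" using iB FB t(1) by metis
            moreover have "convex t" using pB t(1) polyhedron_imp_convex by blast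
            moreover have "x \<in> t" using t(3) F(2) by blast
            ultimately show ?thesis using hullEq[OF t(1) _ t(2)] by blast
          qed
          have i: "\<And>a b. a \<in> B \<Longrightarrow> b \<in> B \<Longrightarrow> (a \<inter> b) face_of a" using iB by blast
          have "aff_dim F = aff_dim s1 - 1" using dF s123(1) by simp
          moreover have "F \<noteq> {}" using F by blast
          ultimately have False
          proof -
            assume dd: "aff_dim F = aff_dim s1 - 1" and Fne: "F \<noteq> {}"
            have B1: "s1 \<in> B" and B2: "s2 \<in> B" and B3: "s3 \<in> B" using s123 by auto
            have P1: "convex s1" "affine hull s1 = affine hull S" "F face_of s1" using props[OF s123(1)] by auto
            have P2: "convex s2" "affine hull s2 = affine hull S" "F face_of s2" using props[OF s123(2)] by auto
            have P3: "convex s3" "affine hull s3 = affine hull S" "F face_of s3" using props[OF s123(3)] by auto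
            have "s2 \<inter> s1 = s1 \<inter> s2" "s3 \<inter> s1 = s1 \<inter> s3" "s3 \<inter> s2 = s2 \<inter> s3" by blast+
            hence j: "(s1 \<inter> s2) face_of s1" "(s1 \<inter> s2) face_of s2" "(s1 \<inter> s3) face_of s1"
              "(s1 \<inter> s3) face_of s3" "(s2 \<inter> s3) face_of s2" "(s2 \<inter> s3) face_of s3"
              using i[OF B1 B2] i[OF B2 B1] i[OF B1 B3] i[OF B3 B1] i[OF B2 B3] i[OF B3 B2] by simp_all
            show False
              by (rule three_sheets[OF P1(1) P2(1) P3(1) _ _ P1(3) P2(3) P3(3) dd j s123(4-6) Fne])
                (simp_all add: P1 P2 P3)
          qed
          thus ?thesis ..
        qed
      qed
      have connU: "connected U" unfolding U_def by (intro convex_connected convex_rel_interior cS)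
      obtain x0 where x0: "x0 \<in> U" using Une by blast
      hence "x0 \<in> \<Union>B" using SB rel_interior_subset[of S] unfolding U_def by blast
      then obtain P where "P \<in> B" "x0 \<in> P" by blast
      then obtain s where s: "s \<in> facets B" "x0 \<in> s" using inFacet by blast
      have "openin (top_of_set U) (U \<inter> s)"
        unfolding openin_contains_ball using key[OF s(1)] by (auto simp: Int_commute)
      moreover have "closedin (top_of_set U) (U \<inter> s)"
        using s pB facB polyhedron_imp_closed closedin_closed_Int by blast
      ultimately have "U \<inter> s = U" using connU x0 s(2) unfolding connected_clopen by blast
      hence "closure U \<subseteq> s" using s pB facB polyhedron_imp_closed closure_minimal
        by (metis inf.absorb_iff1)
      moreover have "closure U = S" using convex_closure_rel_interior[OF cS] clS
        by (simp add: U_def closure_closed)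
      ultimately show ?thesis using s by blast
    qed
  qed
qed

end
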